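(* Let $M$ be a Kähler QCH-manifold of real dimension $2n$ with curvature $\bar R=a\pi+b\Phi+c\Psi$, and let $N$ be a Lagrangian submanifold of $M$ of real dimension $n\geq 2$. Then for every $p\in N$ and every unit vector $X\in T_pN$, $$\mathrm{Ric}(X)\leq \frac{n-1}{4}a+\frac18\{(n-2)[\eta(X)^2+\tilde\eta(X)^2]+1\}b+\|\eta(X)\tilde\eta^{\top}-\tilde\eta(X)\eta^{\top}\|^2c+\frac{(n-1)n}{4}\|H\|^2,$$ where $a,b,c$ are evaluated at $p$. Equality holds for all unit vectors $X\in T_pN$ if and only if either (i) $p$ is a totally geodesic point of $N$, or (ii) $n=2$ and $p$ is an $H$-umbilical point with $\lambda=3\mu$, i.e. there is an orthonormal basis $\{e_1,e_2\}$ of $T_pN$ and a real number $\mu$ with $h(e_1,e_1)=3\mu Je_1$, $h(e_2,e_2)=\mu Je_1$, $h(e_1,e_2)=\mu Je_2$.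
   Context: A Kähler QCH-manifold (Kähler manifold of quasi-constant holomorphic sectional curvatures) is a Kähler manifold $(M,g,J,D)$ of real dimension $2n\geq 4$ with a $J$-invariant distribution $D$ of codimension 2, together with a local unit vector field $\xi$ such that $D^\perp=\mathrm{span}\{\xi,J\xi\}$, whose curvature tensor satisfies $\bar R=a\pi+b\Phi+c\Psi$ for functions $a,b,c$ on $M$. Here $\bar R(X,Y,Z,U)=g(\bar R(X,Y)Z,U)$ with $\bar R(X,Y)Z=\bar\nabla_X\bar\nabla_YZ-\bar\nabla_Y\bar\nabla_XZ-\bar\nabla_{[X,Y]}Z$; $\eta(X)=g(\xi,X)$, $\tilde\eta(X)=g(J\xi,X)$; and $4\pi(X,Y,Z,U)=g(Y,Z)g(X,U)-g(X,Z)g(Y,U)+g(JY,Z)g(JX,U)-g(JX,Z)g(JY,U)-2g(JX,Y)g(JZ,U)$; $8\Phi(X,Y,Z,U)=g(Y,Z)\{\eta(X)\eta(U)+\tilde\eta(X)\tilde\eta(U)\}-g(X,Z)\{\eta(Y)\eta(U)+\tilde\eta(Y)\tilde\eta(U)\}+g(X,U)\{\eta(Y)\eta(Z)+\tilde\eta(Y)\tilde\eta(Z)\}-g(Y,U)\{\eta(X)\eta(Z)+\tilde\eta(X)\tilde\eta(Z)\}+g(JY,Z)\{\eta(X)\tilde\eta(U)-\eta(U)\tilde\eta(X)\}-g(JX,Z)\{\eta(Y)\tilde\eta(U)-\eta(U)\tilde\eta(Y)\}+g(JX,U)\{\eta(Y)\tilde\eta(Z)-\eta(Z)\tilde\eta(Y)\}-g(JY,U)\{\eta(X)\tilde\eta(Z)-\eta(Z)\tilde\eta(X)\}-2g(JX,Y)\{\eta(Z)\tilde\eta(U)-\eta(U)\tilde\eta(Z)\}-2g(JZ,U)\{\eta(X)\tilde\eta(Y)-\eta(Y)\tilde\eta(X)\}$;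 $\Psi(X,Y,Z,U)=\eta(Y)\eta(Z)\tilde\eta(X)\tilde\eta(U)-\eta(X)\eta(Z)\tilde\eta(Y)\tilde\eta(U)+\eta(X)\eta(U)\tilde\eta(Y)\tilde\eta(Z)-\eta(Y)\eta(U)\tilde\eta(X)\tilde\eta(Z)$. A submanifold $N$ of real dimension $n$ is Lagrangian if $J$ maps each $T_pN$ onto the normal space $T_pN^\perp$. $h$ is the second fundamental form, $H=\frac1n\sum_{i=1}^n h(e_i,e_i)$ the mean curvature vector ($\{e_i\}$ an orthonormal basis of $T_pN$); $p$ is totally geodesic if $h=0$ at $p$. The curvature $R$ of $N$ uses the same sign convention; the sectional curvature is $K(e_i\wedge e_j)=R(e_i,e_j,e_j,e_i)$, and for a unit $X=e_1\in T_pN$, $\mathrm{Ric}(X)=\sum_{i=2}^n K(e_1\wedge e_i)$. $\eta^\top,\tilde\eta^\top$ denote the orthogonal projections onto $T_pN$ of the vectors $\xi$, $J\xi$ (the metric duals of $\eta,\tilde\eta$), and $\|\cdot\|$ is the norm induced by $g$. *)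

theory Defs
  imports "HOL-Analysis.Analysis"
begin

text \<open>Pointwise (linear-algebraic) model at a point p of N.
  The ambient tangent space T_pM is a Euclidean space 'a with complex structure J;
  the tangent space T_pN is a subspace L; xi is the unit vector spanning (with J xi)
  the orthogonal complement of D at p.\<close>

definition eta :: "'a::real_inner \<Rightarrow> 'a \<Rightarrow> real" where
  "eta xi X = inner xi X"

definition eta_t :: "('a::real_inner \<Rightarrow> 'a) \<Rightarrow> 'a \<Rightarrow> 'a \<Rightarrow> real" where
  "eta_t J xi X = inner (J xi) X"

definition pi_t :: "('a::real_inner \<Rightarrow> 'a) \<Rightarrow> 'a \<Rightarrow> 'a \<Rightarrow> 'a \<Rightarrow> 'a \<Rightarrow> real" where
  "pi_t J X Y Z U = (1/4) * (inner Y Z * inner X U - inner X Z * inner Y U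
     + inner (J Y) Z * inner (J X) U - inner (J X) Z * inner (J Y) U
     - 2 * inner (J X) Y * inner (J Z) U)"

definition Phi_t :: "('a::real_inner \<Rightarrow> 'a) \<Rightarrow> 'a \<Rightarrow> 'a \<Rightarrow> 'a \<Rightarrow> 'a \<Rightarrow> 'a \<Rightarrow> real" where
  "Phi_t J xi X Y Z U = (let e = eta xi; f = eta_t J xi in (1/8) * (
       inner Y Z * (e X * e U + f X * f U)
     - inner X Z * (e Y * e U + f Y * f U)
     + inner X U * (e Y * e Z + f Y * f Z)
     - inner Y U * (e X * e Z + f X * f Z)
     + inner (J Y) Z * (e X * f U - e U * f X)
     - inner (J X) Z * (e Y * f U - e U * f Y)
     + inner (J X) U * (e Y * f Z - e Z * f Y)
     - inner (J Y) U * (e X * f Z - e Z * f X)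
     - 2 * inner (J X) Y * (e Z * f U - e U * f Z)
     - 2 * inner (J Z) U * (e X * f Y - e Y * f X)))"

definition Psi_t :: "('a::real_inner \<Rightarrow> 'a) \<Rightarrow> 'a \<Rightarrow> 'a \<Rightarrow> 'a \<Rightarrow> 'a \<Rightarrow> 'a \<Rightarrow> real" where
  "Psi_t J xi X Y Z U = (let e = eta xi; f = eta_t J xi in
       e Y * e Z * f X * f U - e X * e Z * f Y * f U
     + e X * e U * f Y * f Z - e Y * e U * f X * f Z)"

definition Rbar :: "real \<Rightarrow> real \<Rightarrow> real \<Rightarrow> ('a::real_inner \<Rightarrow> 'a) \<Rightarrow> 'a \<Rightarrow> 'a \<Rightarrow> 'a \<Rightarrow> 'a \<Rightarrow> 'a \<Rightarrow> real" where
  "Rbar a b c J xi X Y Z U = a * pi_t J X Y Z U + b * Phi_t J xi X Y Z U + c * Psi_t J xi X Y Z U"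

text \<open>Orthonormal family e 0, ..., e (n-1) in L (an orthonormal basis when dim L = n).\<close>
definition onb :: "'a::real_inner set \<Rightarrow> nat \<Rightarrow> (nat \<Rightarrow> 'a) \<Rightarrow> bool" where
  "onb L n e \<longleftrightarrow> (\<forall>i<n. e i \<in> L) \<and> (\<forall>i<n. \<forall>j<n. inner (e i) (e j) = (if i = j then 1 else 0))"

text \<open>Ric(X) = sum of K(e_1 /\ e_i), i = 2..n, for an orthonormal basis with e_1 = X
  (indices shifted to 0..n-1).\<close>
definition Ric :: "'a::real_inner set \<Rightarrow> nat \<Rightarrow> ('a \<Rightarrow> 'a \<Rightarrow> 'a \<Rightarrow> 'a \<Rightarrow> real) \<Rightarrow> 'a \<Rightarrow> real" where
  "Ric L n R X = (let e = (SOME e. onb L n e \<and> e 0 = X) in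
     (\<Sum>i\<in>{1..<n}. R (e 0) (e i) (e i) (e 0)))"

definition mean_curv :: "'a::real_inner set \<Rightarrow> nat \<Rightarrow> ('a \<Rightarrow> 'a \<Rightarrow> 'a) \<Rightarrow> 'a" where
  "mean_curv L n h = (let e = (SOME e. onb L n e) in
     (1 / real n) *\<^sub>R (\<Sum>i<n. h (e i) (e i)))"

definition tproj :: "'a::real_inner set \<Rightarrow> 'a \<Rightarrow> 'a" where
  "tproj L v = (THE w. w \<in> L \<and> (\<forall>x\<in>L. inner (v - w) x = 0))"

end

theory Submission
  imports Defs
begin


lemma onb_inner: "onb L n e \<Longrightarrow> i<n \<Longrightarrow> j<n \<Longrightarrow> inner (e i) (e j) = (if i=j then 1 else 0)"
  by (simp add: onb_def)

lemma onb_in: "onb L n e \<Longrightarrow> i<n \<Longrightarrow> e i \<in> L"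
  by (simp add: onb_def)

lemma onb_sum_inner:
  assumes "onb L n e" "j<n"
  shows "inner (\<Sum>i<n. f i *\<^sub>R e i) (e j) = f j"
proof -
  have "inner (\<Sum>i<n. f i *\<^sub>R e i) (e j) = (\<Sum>i<n. f i * inner (e i) (e j))"
    by (simp add: inner_sum_left)
  also have "\<dots> = (\<Sum>i<n. if i = j then f i else 0)"
    by (rule sum.cong) (use assms in \<open>auto simp: onb_inner\<close>)
  also have "\<dots> = f j" using assms(2) by simp
  finally show ?thesis .
qed

lemma onb_span:
  fixes L :: "'a::euclidean_space set"
  assumes "subspace L" "dim L = n" "onb L n e"
  shows "span (e ` {..<n}) = L"
proof -
  have inj: "inj_on e {..<n}"
  proof
    fix i j assume "i \<in> {..<n}" "j \<in> {..<n}" "e i = e j"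
    then show "i = j" using onb_inner[OF assms(3), of i j] onb_inner[OF assms(3), of i i]
      by (auto split: if_splits)
  qed
  have ind: "independent (e ` {..<n})"
    apply (rule pairwise_orthogonal_independent)
    using assms(3) unfolding pairwise_def orthogonal_def onb_def by (auto, metis inner_zero_left zero_neq_one)
  have card: "card (e ` {..<n}) = dim L" using inj assms(2) by (simp add: card_image)
  have sub: "e ` {..<n} \<subseteq> L" using assms(3) by (auto simp: onb_def)
  have "L \<subseteq> span (e ` {..<n})" using card_eq_dim[OF sub card] ind by auto
  moreover have "span (e ` {..<n}) \<subseteq> L" using sub assms(1) by (simp add: span_minimal)
  ultimately show ?thesis by auto
qed

lemma onb_orth_L:
  fixes L :: "'a::euclidean_space set"
  assumes "subspace L" "dim L = n" "onb L n e" "\<And>j. j<n \<Longrightarrow> inner y (e j) = 0" "x \<in> L"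
  shows "inner y x = 0"
proof -
  have "x \<in> span (e ` {..<n})" using onb_span assms by auto
  then have "orthogonal y x"
    by (rule orthogonal_to_span) (use assms(4) in \<open>auto simp: orthogonal_def\<close>)
  then show ?thesis by (simp add: orthogonal_def)
qed

lemma onb_expand:
  fixes L :: "'a::euclidean_space set"
  assumes "subspace L" "dim L = n" "onb L n e" "x \<in> L"
  shows "x = (\<Sum>i<n. inner x (e i) *\<^sub>R e i)"
proof -
  let ?y = "x - (\<Sum>i<n. inner x (e i) *\<^sub>R e i)"
  have o: "inner ?y (e j) = 0" if "j<n" for j
    using onb_sum_inner[OF assms(3) that, of "\<lambda>i. inner x (e i)"]
    by (simp add: inner_diff_left)
  have yL: "?y \<in> L"
    by (intro subspace_diff[OF assms(1) assms(4)] subspace_sum[OF assms(1)] subspace_scale[OF assms(1)])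
       (use assms(3) in \<open>auto simp: onb_def\<close>)
  have "inner ?y ?y = 0" by (rule onb_orth_L[OF assms(1-3) o yL])
  then show ?thesis by simp
qed

lemma onb_parseval:
  fixes L :: "'a::euclidean_space set"
  assumes "subspace L" "dim L = n" "onb L n e" "x \<in> L"
  shows "inner x y = (\<Sum>i<n. inner x (e i) * inner (e i) y)"
proof -
  have "inner x y = inner (\<Sum>i<n. inner x (e i) *\<^sub>R e i) y"
    using onb_expand[OF assms] by simp
  then show ?thesis by (simp add: inner_sum_left)
qed

lemma onb_norm_sum:
  assumes "onb L n e"
  shows "(norm (\<Sum>i<n. f i *\<^sub>R e i))\<^sup>2 = (\<Sum>i<n. (f i)\<^sup>2)"
proof -
  have "(norm (\<Sum>i<n. f i *\<^sub>R e i))\<^sup>2 = inner (\<Sum>i<n. f i *\<^sub>R e i) (\<Sum>j<n. f j *\<^sub>R e j)"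
    by (simp add: power2_norm_eq_inner)
  also have "\<dots> = (\<Sum>j<n. f j * inner (\<Sum>i<n. f i *\<^sub>R e i) (e j))"
    by (simp add: inner_sum_right)
  also have "\<dots> = (\<Sum>j<n. (f j)\<^sup>2)"
    by (rule sum.cong) (use assms in \<open>auto simp: onb_sum_inner power2_eq_square\<close>)
  finally show ?thesis .
qed




lemma onb_exists_X:
  fixes L :: "'a::euclidean_space set"
  assumes "subspace L" "dim L = n" "X \<in> L" "norm X = 1"
  shows "\<exists>e. onb L n e \<and> e 0 = X"
proof -
  let ?S = "{y \<in> L. inner X y = 0}"
  have sS: "subspace ?S" using assms(1)
    by (auto simp: subspace_def inner_add_right)
  obtain B where B: "B \<subseteq> ?S" "pairwise orthogonal B" "\<And>x. x\<in>B \<Longrightarrow> norm x = 1"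
      "independent B" "card B = dim ?S" "span B = ?S"
    using orthonormal_basis_subspace[OF sS] by blast
  have XX: "inner X X = 1" using assms(4) by (simp add: norm_eq_1)
  have XB: "X \<notin> B" using B(1) XX by auto
  have finB: "finite B" using B(4) finiteI_independent by blast
  have indB': "independent (insert X B)"
  proof (rule pairwise_orthogonal_independent)
    show "pairwise orthogonal (insert X B)"
      using B(1,2) by (auto simp: pairwise_insert orthogonal_def inner_commute)
    show "0 \<notin> insert X B" using assms(4) B(3) by force
  qed
  have spanL: "span (insert X B) = L"
  proof
    show "span (insert X B) \<subseteq> L"
      using assms(1,3) B(1) by (intro span_minimal) auto
    show "L \<subseteq> span (insert X B)"
    proof
      fix y assume y: "y \<in> L"
      have "y - inner X y *\<^sub>R X \<in> ?S"
        using y assms(1,3) XX by (auto simp: subspace_diff subspace_scale inner_diff_right)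
      then have "y - inner X y *\<^sub>R X \<in> span (insert X B)"
        using B(6) span_mono[of B "insert X B"] by auto
      moreover have "inner X y *\<^sub>R X \<in> span (insert X B)"
        by (intro span_scale span_base) auto
      ultimately have "(y - inner X y *\<^sub>R X) + inner X y *\<^sub>R X \<in> span (insert X B)"
        by (rule span_add)
      then show "y \<in> span (insert X B)" by simp
    qed
  qed
  have "card (insert X B) = n" using dim_span_eq_card_independent[OF indB'] spanL assms(2) by simp
  then have cardB: "card B = n - 1" using XB finB by simp
  obtain g where g: "bij_betw g {0..<n-1} B" using ex_bij_betw_nat_finite[OF finB] cardB by metis
  define e where "e i = (if i = 0 then X else g (i - 1))" for i
  have gB: "g (i - 1) \<in> B" if "i < n" "i \<noteq> 0" for i
    using g that by (auto simp: bij_betw_def)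
  show ?thesis
  proof (intro exI conjI)
    show "e 0 = X" by (simp add: e_def)
    show "onb L n e" unfolding onb_def
    proof (intro conjI allI impI)
      fix i assume "i < n" then show "e i \<in> L"
        using gB[of i] B(1) assms(3) by (auto simp: e_def)
    next
      fix i j assume ij: "i<n" "j<n"
      show "inner (e i) (e j) = (if i=j then 1 else 0)"
      proof (cases "i = 0")
        case True
        then show ?thesis using XX gB[of j] ij B(1) by (auto simp: e_def)
      next
        case False
        note i0 = False
        show ?thesis
        proof (cases "j = 0")
          case True
          then show ?thesis using i0 gB[of i] ij B(1) by (auto simp: e_def inner_commute)
        next
          case False
          show ?thesis
          proof (cases "i = j")
            case True
            then show ?thesis using False B(3) gB[of j] ij by (auto simp: e_def norm_eq_1)
          next
            case ne: False
            have "i - 1 \<noteq> j - 1" "i - 1 \<in> {0..<n-1}" "j - 1 \<in> {0..<n-1}"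
              using ij i0 False ne by auto
            then have "g (i - 1) \<noteq> g (j - 1)"
              using g unfolding bij_betw_def by (meson inj_onD)
            then show ?thesis using B(2) gB[of i] gB[of j] ij i0 False ne
              by (auto simp: e_def pairwise_def orthogonal_def)
          qed
        qed
      qed
    qed
  qed
qed




locale lagr =
  fixes J :: "'a::euclidean_space \<Rightarrow> 'a" and L :: "'a set" and n :: nat and h :: "'a \<Rightarrow> 'a \<Rightarrow> 'a"
  assumes J_lin: "linear J"
    and J_sq: "\<And>x. J (J x) = - x"
    and J_isom: "\<And>x y. inner (J x) (J y) = inner x y"
    and L_sub: "subspace L"
    and L_dim: "dim L = n"
    and Lagr: "J ` L = {v. \<forall>x\<in>L. inner v x = 0}"
    and h_bil: "bilinear h"
    and h_sym: "\<And>X Y. X \<in> L \<Longrightarrow> Y \<in> L \<Longrightarrow> h X Y = h Y X"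
    and h_normal: "\<And>X Y Z. X \<in> L \<Longrightarrow> Y \<in> L \<Longrightarrow> Z \<in> L \<Longrightarrow> inner (h X Y) Z = 0"
    and h_cubic: "\<And>X Y Z. X \<in> L \<Longrightarrow> Y \<in> L \<Longrightarrow> Z \<in> L \<Longrightarrow>
                    inner (h X Y) (J Z) = inner (h X Z) (J Y)"
begin

lemma JL_orth: "x \<in> L \<Longrightarrow> y \<in> L \<Longrightarrow> inner (J x) y = 0"
  using Lagr by blast

lemma JL_orth': "x \<in> L \<Longrightarrow> y \<in> L \<Longrightarrow> inner y (J x) = 0"
  using JL_orth by (simp add: inner_commute)

lemma J_swap: "inner (J x) y = - inner x (J y)"
proof -
  have "inner (J x) y = inner (J (J x)) (J y)" by (simp add: J_isom)
  then show ?thesis by (simp add: J_sq)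
qed

lemma J_norm: "norm (J x) = norm x"
  using J_isom[of x x] by (simp add: norm_eq_sqrt_inner)

lemma vexp:
  assumes "onb L n e"
  shows "v = (\<Sum>i<n. inner v (e i) *\<^sub>R e i) + (\<Sum>i<n. inner v (J (e i)) *\<^sub>R J (e i))"
proof -
  define w where "w = v - (\<Sum>i<n. inner v (e i) *\<^sub>R e i)"
  have w0: "inner w (e j) = 0" if "j<n" for j
    using onb_sum_inner[OF assms that, of "\<lambda>i. inner v (e i)"] by (simp add: w_def inner_diff_left)
  have "w \<in> {v. \<forall>x\<in>L. inner v x = 0}" using onb_orth_L[OF L_sub L_dim assms w0] by auto
  then obtain z where z: "z \<in> L" "w = J z" using Lagr by (metis imageE)
  have "z = (\<Sum>i<n. inner z (e i) *\<^sub>R e i)" by (rule onb_expand[OF L_sub L_dim assms z(1)])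
  then have "J z = J (\<Sum>i<n. inner z (e i) *\<^sub>R e i)" by simp
  also have "\<dots> = (\<Sum>i<n. inner z (e i) *\<^sub>R J (e i))"
    by (simp add: linear_sum[OF J_lin] linear_scale[OF J_lin])
  also have "\<dots> = (\<Sum>i<n. inner v (J (e i)) *\<^sub>R J (e i))"
  proof (rule sum.cong)
    fix i assume i: "i \<in> {..<n}"
    have "inner z (e i) = inner (J z) (J (e i))" by (simp add: J_isom)
    also have "\<dots> = inner w (J (e i))" using z by simp
    also have "\<dots> = inner v (J (e i)) - (\<Sum>j<n. inner v (e j) * inner (e j) (J (e i)))"
      by (simp add: w_def inner_diff_left inner_sum_left)
    also have "(\<Sum>j<n. inner v (e j) * inner (e j) (J (e i))) = 0"
      using i assms by (intro sum.neutral) (auto simp: JL_orth' onb_in)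
    finally show "inner z (e i) *\<^sub>R J (e i) = inner v (J (e i)) *\<^sub>R J (e i)" by simp
  qed simp
  finally have "w = (\<Sum>i<n. inner v (J (e i)) *\<^sub>R J (e i))" using z by simp
  then show ?thesis unfolding w_def by (simp add: algebra_simps)
qed

lemma inner_full:
  assumes "onb L n e"
  shows "inner u v = (\<Sum>i<n. inner u (e i) * inner v (e i)) + (\<Sum>i<n. inner u (J (e i)) * inner v (J (e i)))"
proof -
  have "inner u v = inner u ((\<Sum>i<n. inner v (e i) *\<^sub>R e i) + (\<Sum>i<n. inner v (J (e i)) *\<^sub>R J (e i)))"
    using vexp[OF assms, of v] by simp
  then show ?thesis by (simp add: inner_add_right inner_sum_right mult.commute)
qed

lemma inner_normal:
  assumes "onb L n e" "\<And>i. i<n \<Longrightarrow> inner u (e i) = 0"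
  shows "inner u v = (\<Sum>i<n. inner u (J (e i)) * inner v (J (e i)))"
  using inner_full[OF assms(1), of u v] assms(2) by simp

lemma h_in_normal: "x \<in> L \<Longrightarrow> y \<in> L \<Longrightarrow> onb L n e \<Longrightarrow> i<n \<Longrightarrow> inner (h x y) (e i) = 0"
  using h_normal onb_in by blast

lemma xi_parseval:
  assumes "onb L n e"
  shows "(\<Sum>i<n. (eta xi (e i))\<^sup>2 + (eta_t J xi (e i))\<^sup>2) = (norm xi)\<^sup>2"
proof -
  have "(norm xi)\<^sup>2 = inner xi xi" by (simp add: power2_norm_eq_inner)
  also have "\<dots> = (\<Sum>i<n. (inner xi (e i))\<^sup>2) + (\<Sum>i<n. (inner xi (J (e i)))\<^sup>2)"
    using inner_full[OF assms, of xi xi] by (simp add: power2_eq_square)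
  also have "\<dots> = (\<Sum>i<n. (eta xi (e i))\<^sup>2 + (eta_t J xi (e i))\<^sup>2)"
    by (simp add: sum.distrib eta_def eta_t_def J_swap)
  finally show ?thesis by simp
qed

lemma tproj_eq:
  assumes "onb L n e"
  shows "tproj L v = (\<Sum>i<n. inner v (e i) *\<^sub>R e i)"
  unfolding tproj_def
proof (rule the_equality)
  let ?w = "\<Sum>i<n. inner v (e i) *\<^sub>R e i"
  have wL: "?w \<in> L"
    by (intro subspace_sum[OF L_sub] subspace_scale[OF L_sub]) (use assms in \<open>auto simp: onb_in\<close>)
  have o: "inner (v - ?w) (e j) = 0" if "j<n" for j
    using onb_sum_inner[OF assms that, of "\<lambda>i. inner v (e i)"] by (simp add: inner_diff_left)
  show "?w \<in> L \<and> (\<forall>x\<in>L. inner (v - ?w) x = 0)"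
    using wL onb_orth_L[OF L_sub L_dim assms o] by blast
  fix w' assume w': "w' \<in> L \<and> (\<forall>x\<in>L. inner (v - w') x = 0)"
  have d: "?w - w' \<in> L" using wL w' L_sub by (simp add: subspace_diff)
  have "inner (v - w') (?w - w') = 0" "inner (v - ?w) (?w - w') = 0"
    using w' d onb_orth_L[OF L_sub L_dim assms o] by auto
  then have "inner (?w - w') (?w - w') = 0" by (simp add: inner_diff_left inner_diff_right)
  then show "w' = ?w" by simp
qed

lemma h_sum:
  "h (\<Sum>i\<in>S. f i) (\<Sum>j\<in>T. g j) = (\<Sum>i\<in>S. \<Sum>j\<in>T. h (f i) (g j))"
  using bilinear_sum[OF h_bil, of f S g T] by (simp add: sum.cartesian_product)

lemma h_scale: "h (a *\<^sub>R x) (b *\<^sub>R y) = (a * b) *\<^sub>R h x y"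
  using h_bil by (simp add: bilinear_lmul bilinear_rmul)

lemma trace_indep:
  assumes "onb L n e" "onb L n e'"
  shows "(\<Sum>i<n. h (e' i) (e' i)) = (\<Sum>i<n. h (e i) (e i))"
proof -
  have "(\<Sum>i<n. h (e' i) (e' i))
      = (\<Sum>i<n. \<Sum>j<n. \<Sum>l<n. (inner (e' i) (e j) * inner (e' i) (e l)) *\<^sub>R h (e j) (e l))"
  proof (rule sum.cong)
    fix i assume "i \<in> {..<n}"
    then have ei: "e' i = (\<Sum>j<n. inner (e' i) (e j) *\<^sub>R e j)"
      using onb_expand[OF L_sub L_dim assms(1)] assms(2) onb_in by blast
    have "h (e' i) (e' i) = h (\<Sum>j<n. inner (e' i) (e j) *\<^sub>R e j) (\<Sum>l<n. inner (e' i) (e l) *\<^sub>R e l)"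
      using ei by metis
    then show "h (e' i) (e' i) = (\<Sum>j<n. \<Sum>l<n. (inner (e' i) (e j) * inner (e' i) (e l)) *\<^sub>R h (e j) (e l))"
      by (simp add: h_sum h_scale)
  qed simp
  also have "\<dots> = (\<Sum>j<n. \<Sum>l<n. (\<Sum>i<n. inner (e' i) (e j) * inner (e' i) (e l)) *\<^sub>R h (e j) (e l))"
  proof -
    have "(\<Sum>i<n. \<Sum>j<n. \<Sum>l<n. (inner (e' i) (e j) * inner (e' i) (e l)) *\<^sub>R h (e j) (e l))
       = (\<Sum>j<n. \<Sum>i<n. \<Sum>l<n. (inner (e' i) (e j) * inner (e' i) (e l)) *\<^sub>R h (e j) (e l))"
      by (rule sum.swap)
    also have "\<dots> = (\<Sum>j<n. \<Sum>l<n. \<Sum>i<n. (inner (e' i) (e j) * inner (e' i) (e l)) *\<^sub>R h (e j) (e l))"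
      by (rule sum.cong[OF refl], rule sum.swap)
    finally show ?thesis by (simp add: scaleR_sum_left)
  qed
  also have "\<dots> = (\<Sum>j<n. \<Sum>l<n. (inner (e j) (e l)) *\<^sub>R h (e j) (e l))"
  proof (intro sum.cong refl)
    fix j l assume "j \<in> {..<n}" "l \<in> {..<n}"
    then have "inner (e j) (e l) = (\<Sum>i<n. inner (e j) (e' i) * inner (e' i) (e l))"
      using onb_parseval[OF L_sub L_dim assms(2)] assms(1) onb_in by blast
    then show "(\<Sum>i<n. inner (e' i) (e j) * inner (e' i) (e l)) *\<^sub>R h (e j) (e l) = inner (e j) (e l) *\<^sub>R h (e j) (e l)"
      by (simp add: inner_commute)
  qed
  also have "\<dots> = (\<Sum>j<n. h (e j) (e j))"
  proof (rule sum.cong)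
    fix j assume j: "j \<in> {..<n}"
    have "(\<Sum>l<n. (inner (e j) (e l)) *\<^sub>R h (e j) (e l)) = (\<Sum>l<n. if l = j then h (e j) (e l) else 0)"
      by (rule sum.cong) (use j assms(1) in \<open>auto simp: onb_inner\<close>)
    then show "(\<Sum>l<n. (inner (e j) (e l)) *\<^sub>R h (e j) (e l)) = h (e j) (e j)" using j by simp
  qed simp
  finally show ?thesis .
qed

end



definition Dq :: "nat \<Rightarrow> (nat \<Rightarrow> nat \<Rightarrow> nat \<Rightarrow> real) \<Rightarrow> real" where
  "Dq n c = (real n - 1) / (4 * real n) * (\<Sum>k<n. (\<Sum>i<n. c i i k)\<^sup>2)
     - (\<Sum>i\<in>{1..<n}. \<Sum>k<n. c 0 0 k * c i i k) + (\<Sum>i\<in>{1..<n}. \<Sum>k<n. (c 0 i k)\<^sup>2)"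

lemma sum_split0: "0 < (n::nat) \<Longrightarrow> (\<Sum>i<n. f i) = f 0 + (\<Sum>i\<in>{1..<n}. f i)"
  using sum.atLeast_Suc_lessThan[of 0 n f] by (simp add: atLeast0LessThan)

lemma Rbar_orth:
  fixes J :: "'a::real_inner \<Rightarrow> 'a"
  assumes "inner X X = 1" "inner Y Y = 1" "inner X Y = 0"
    "inner (J X) Y = 0" "inner (J Y) X = 0" "inner (J X) X = 0" "inner (J Y) Y = 0"
  shows "Rbar a b c J xi X Y Y X = a / 4
     + b / 8 * ((eta xi X)\<^sup>2 + (eta_t J xi X)\<^sup>2 + (eta xi Y)\<^sup>2 + (eta_t J xi Y)\<^sup>2)
     + c * (eta xi X * eta_t J xi Y - eta_t J xi X * eta xi Y)\<^sup>2"
proof -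
  have "inner Y X = 0" using assms(3) by (simp add: inner_commute)
  then show ?thesis using assms
    unfolding Rbar_def pi_t_def Phi_t_def Psi_t_def Let_def
    by (simp add: power2_eq_square algebra_simps)
qed

context lagr begin

definition hc :: "(nat \<Rightarrow> 'a) \<Rightarrow> nat \<Rightarrow> nat \<Rightarrow> nat \<Rightarrow> real" where
  "hc e i j k = inner (h (e i) (e j)) (J (e k))"

lemma hc_sym1: "onb L n e \<Longrightarrow> i<n \<Longrightarrow> j<n \<Longrightarrow> hc e i j k = hc e j i k"
  by (simp add: hc_def h_sym onb_in)

lemma hc_sym2: "onb L n e \<Longrightarrow> i<n \<Longrightarrow> j<n \<Longrightarrow> k<n \<Longrightarrow> hc e i j k = hc e i k j"
  by (simp add: hc_def h_cubic onb_in)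

lemma h_inner_h:
  assumes "onb L n e" "x \<in> L" "y \<in> L" "z \<in> L" "w \<in> L"
  shows "inner (h x y) (h z w) = (\<Sum>k<n. inner (h x y) (J (e k)) * inner (h z w) (J (e k)))"
  by (rule inner_normal[OF assms(1)]) (use assms in \<open>simp add: h_in_normal\<close>)

lemma mean_curv_sq:
  assumes "onb L n e" "0 < n"
  shows "(norm (mean_curv L n h))\<^sup>2 = (1 / (real n)\<^sup>2) * (\<Sum>k<n. (\<Sum>i<n. hc e i i k)\<^sup>2)"
proof -
  have ex: "\<exists>e. onb L n e" using assms(1) by blast
  define e' where "e' = (SOME e. onb L n e)"
  have e': "onb L n e'" unfolding e'_def using someI_ex[OF ex] .
  define T where "T = (\<Sum>i<n. h (e i) (e i))"
  have mc: "mean_curv L n h = (1 / real n) *\<^sub>R T"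
    unfolding mean_curv_def Let_def e'_def[symmetric] T_def using trace_indep[OF assms(1) e'] by simp
  have T0: "inner T (e j) = 0" if "j < n" for j
    unfolding T_def inner_sum_left using assms(1) that by (intro sum.neutral) (auto simp: h_in_normal onb_in)
  have "inner T T = (\<Sum>k<n. inner T (J (e k)) * inner T (J (e k)))"
    by (rule inner_normal[OF assms(1) T0])
  also have "\<dots> = (\<Sum>k<n. (\<Sum>i<n. hc e i i k)\<^sup>2)"
    by (simp add: T_def inner_sum_left hc_def power2_eq_square)
  finally have "inner T T = (\<Sum>k<n. (\<Sum>i<n. hc e i i k)\<^sup>2)" .
  moreover have "(norm (mean_curv L n h))\<^sup>2 = (1/real n)\<^sup>2 * (norm T)\<^sup>2"
    unfolding mc by (simp add: power_divide)
  ultimately show ?thesis by (simp add: power2_norm_eq_inner field_simps)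
qed

lemma psi_norm:
  assumes "onb L n e"
  shows "(norm (eta xi X *\<^sub>R tproj L (J xi) - eta_t J xi X *\<^sub>R tproj L xi))\<^sup>2
       = (\<Sum>i<n. (eta xi X * eta_t J xi (e i) - eta_t J xi X * eta xi (e i))\<^sup>2)"
proof -
  have "eta xi X *\<^sub>R tproj L (J xi) - eta_t J xi X *\<^sub>R tproj L xi
      = (\<Sum>i<n. (eta xi X * eta_t J xi (e i) - eta_t J xi X * eta xi (e i)) *\<^sub>R e i)"
    by (simp add: tproj_eq[OF assms] scaleR_sum_right sum_subtractf[symmetric] algebra_simps
        eta_def eta_t_def inner_commute)
  then show ?thesis using onb_norm_sum[OF assms] by simp
qed

lemma ric_formula:
  fixes xi :: 'a and a b cc :: real and R :: "'a \<Rightarrow> 'a \<Rightarrow> 'a \<Rightarrow> 'a \<Rightarrow> real"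
  assumes e: "onb L n e" and n2: "2 \<le> n" and xi1: "norm xi = 1"
    and Gauss: "\<And>X Y Z W. X \<in> L \<Longrightarrow> Y \<in> L \<Longrightarrow> Z \<in> L \<Longrightarrow> W \<in> L \<Longrightarrow>
                  R X Y Z W = Rbar a b cc J xi X Y Z W + inner (h X W) (h Y Z) - inner (h X Z) (h Y W)"
  shows "(\<Sum>i\<in>{1..<n}. R (e 0) (e i) (e i) (e 0)) =
         real (n - 1) / 4 * a
              + (1/8) * (real (n - 2) * ((eta xi (e 0))\<^sup>2 + (eta_t J xi (e 0))\<^sup>2) + 1) * b
              + (norm (eta xi (e 0) *\<^sub>R tproj L (J xi) - eta_t J xi (e 0) *\<^sub>R tproj L xi))\<^sup>2 * cc
              + real ((n - 1) * n) / 4 * (norm (mean_curv L n h))\<^sup>2 - Dq n (hc e)"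
proof -
  have n0: "0 < n" using n2 by simp
  let ?E = "\<lambda>i. (eta xi (e i))\<^sup>2 + (eta_t J xi (e i))\<^sup>2"
  let ?P = "\<lambda>i. (eta xi (e 0) * eta_t J xi (e i) - eta_t J xi (e 0) * eta xi (e i))"
  have L0: "e 0 \<in> L" using e n0 onb_in by blast
  have trm: "R (e 0) (e i) (e i) (e 0) = a / 4 + b / 8 * (?E 0 + ?E i) + cc * (?P i)\<^sup>2
      + (\<Sum>k<n. hc e 0 0 k * hc e i i k) - (\<Sum>k<n. (hc e 0 i k)\<^sup>2)"
    if i: "i \<in> {1..<n}" for i
  proof -
    have Li: "e i \<in> L" using e i onb_in by auto
    have rb: "Rbar a b cc J xi (e 0) (e i) (e i) (e 0) = a / 4 + b / 8 * ((eta xi (e 0))\<^sup>2 + (eta_t J xi (e 0))\<^sup>2 + (eta xi (e i))\<^sup>2 + (eta_t J xi (e i))\<^sup>2) + cc * (?P i)\<^sup>2"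
      by (rule Rbar_orth) (use e i n0 Li L0 in \<open>auto simp: onb_inner JL_orth\<close>)
    have "inner (h (e 0) (e 0)) (h (e i) (e i)) = (\<Sum>k<n. hc e 0 0 k * hc e i i k)"
      unfolding hc_def by (rule h_inner_h[OF e L0 L0 Li Li])
    moreover have "inner (h (e 0) (e i)) (h (e i) (e 0)) = (\<Sum>k<n. (hc e 0 i k)\<^sup>2)"
      unfolding hc_def using h_inner_h[OF e L0 Li Li L0] h_sym[OF L0 Li] by (simp add: power2_eq_square)
    ultimately show ?thesis using Gauss[OF L0 Li Li L0] rb by (simp add: add.assoc)
  qed
  have "(\<Sum>i\<in>{1..<n}. R (e 0) (e i) (e i) (e 0)) =
     (\<Sum>i\<in>{1..<n}. a / 4 + b / 8 * (?E 0 + ?E i) + cc * (?P i)\<^sup>2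
      + (\<Sum>k<n. hc e 0 0 k * hc e i i k) - (\<Sum>k<n. (hc e 0 i k)\<^sup>2))"
    using trm by (rule sum.cong[OF refl])
  also have "\<dots> = real (n - 1) * (a / 4) + b / 8 * (real (n - 1) * ?E 0 + (\<Sum>i\<in>{1..<n}. ?E i))
      + cc * (\<Sum>i\<in>{1..<n}. (?P i)\<^sup>2)
      + (\<Sum>i\<in>{1..<n}. \<Sum>k<n. hc e 0 0 k * hc e i i k) - (\<Sum>i\<in>{1..<n}. \<Sum>k<n. (hc e 0 i k)\<^sup>2)"
    by (simp add: sum.distrib sum_subtractf sum_distrib_left algebra_simps)
  also have "(\<Sum>i\<in>{1..<n}. ?E i) = 1 - ?E 0"
    using xi_parseval[OF e, of xi] sum_split0[OF n0, of ?E] xi1 by simp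
  also have "(\<Sum>i\<in>{1..<n}. (?P i)\<^sup>2) = (norm (eta xi (e 0) *\<^sub>R tproj L (J xi) - eta_t J xi (e 0) *\<^sub>R tproj L xi))\<^sup>2"
    using psi_norm[OF e, of xi "e 0"] sum_split0[OF n0, of "\<lambda>i. (?P i)\<^sup>2"] by (simp add: mult.commute)
  also have "(\<Sum>i\<in>{1..<n}. \<Sum>k<n. (hc e 0 i k)\<^sup>2) = Dq n (hc e) + (\<Sum>i\<in>{1..<n}. \<Sum>k<n. hc e 0 0 k * hc e i i k)
         - (real n - 1) / (4 * real n) * (\<Sum>k<n. (\<Sum>i<n. hc e i i k)\<^sup>2)"
    by (simp add: Dq_def)
  also have "(\<Sum>k<n. (\<Sum>i<n. hc e i i k)\<^sup>2) = (real n)\<^sup>2 * (norm (mean_curv L n h))\<^sup>2"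
    using mean_curv_sq[OF e n0] n0 by simp
  also have "(real n - 1) / (4 * real n) * ((real n)\<^sup>2 * (norm (mean_curv L n h))\<^sup>2)
      = real ((n - 1) * n) / 4 * (norm (mean_curv L n h))\<^sup>2"
    using n2 by (simp add: of_nat_diff power2_eq_square)
  finally show ?thesis using n2 by (simp add: of_nat_diff algebra_simps)
qed

end



lemma G_ident:
  fixes x u v :: real
  assumes "x \<ge> 2"
  shows "4*x*(x-1) * ((x-1)/(4*x)*(u+v)\<^sup>2 - u* v + u\<^sup>2) = 4*x*(x-2)*u\<^sup>2 + ((x-1)* v - (x+1)*u)\<^sup>2"
  using assms by (simp add: field_simps power2_eq_square)

lemma G_props:
  fixes x u v :: real
  assumes x: "x \<ge> 2"
  shows "(x-1)/(4*x)*(u+v)\<^sup>2 - u* v + u\<^sup>2 \<ge> 0"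
    and "(x-1)/(4*x)*(u+v)\<^sup>2 - u* v + u\<^sup>2 = 0 \<Longrightarrow> (x > 2 \<longrightarrow> u = 0) \<and> (x-1)* v = (x+1)*u"
proof -
  let ?G = "(x-1)/(4*x)*(u+v)\<^sup>2 - u* v + u\<^sup>2"
  have p: "4*x*(x-1) > 0" using x by simp
  have r: "4*x*(x-2)*u\<^sup>2 \<ge> 0" using x by simp
  have e: "4*x*(x-1) * ?G = 4*x*(x-2)*u\<^sup>2 + ((x-1)* v - (x+1)*u)\<^sup>2" by (rule G_ident[OF x])
  then have "4*x*(x-1) * ?G \<ge> 0" using r by (simp add: add_nonneg_nonneg)
  then show "?G \<ge> 0" using p by (simp add: zero_le_mult_iff)
  assume "?G = 0"
  then have "4*x*(x-2)*u\<^sup>2 + ((x-1)* v - (x+1)*u)\<^sup>2 = 0" using e by simp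
  then have a: "4*x*(x-2)*u\<^sup>2 = 0" and b: "((x-1)* v - (x+1)*u)\<^sup>2 = 0"
    using r by (smt (verit) zero_le_power2)+
  show "(x > 2 \<longrightarrow> u = 0) \<and> (x-1)* v = (x+1)*u"
    using a b x by auto
qed

lemma var_ident:
  fixes b :: "nat \<Rightarrow> real"
  assumes "finite S" "S \<noteq> {}"
  shows "(\<Sum>k\<in>S. (b k)\<^sup>2) = (\<Sum>k\<in>S. b k)\<^sup>2 / real (card S) + (\<Sum>k\<in>S. (b k - (\<Sum>j\<in>S. b j) / real (card S))\<^sup>2)"
proof -
  let ?s = "\<Sum>j\<in>S. b j" and ?N = "real (card S)"
  have N: "?N > 0" using assms by (simp add: card_gt_0_iff)
  have "(\<Sum>k\<in>S. (b k - ?s / ?N)\<^sup>2) = (\<Sum>k\<in>S. (b k)\<^sup>2 - 2 * (?s/?N) * b k + (?s/?N)\<^sup>2)"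
    by (simp add: power2_diff algebra_simps)
  also have "\<dots> = (\<Sum>k\<in>S. (b k)\<^sup>2) - 2 * (?s/?N) * ?s + ?N * (?s/?N)\<^sup>2"
    by (simp add: sum.distrib sum_subtractf sum_distrib_left)
  also have "\<dots> = (\<Sum>k\<in>S. (b k)\<^sup>2) - ?s\<^sup>2 / ?N"
    using N by (simp add: field_simps power2_eq_square)
  finally show ?thesis by simp
qed

definition qn :: "nat \<Rightarrow> real" where "qn n = (real n - 1) / (4 * real n)"

definition G0 :: "nat \<Rightarrow> (nat \<Rightarrow> nat \<Rightarrow> nat \<Rightarrow> real) \<Rightarrow> real" where
  "G0 n c = qn n * (c 0 0 0 + (\<Sum>i\<in>{1..<n}. c i i 0))\<^sup>2 - c 0 0 0 * (\<Sum>i\<in>{1..<n}. c i i 0)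
     + (\<Sum>k\<in>{1..<n}. (c k k 0)\<^sup>2)"

definition Gk :: "nat \<Rightarrow> (nat \<Rightarrow> nat \<Rightarrow> nat \<Rightarrow> real) \<Rightarrow> nat \<Rightarrow> real" where
  "Gk n c k = qn n * (c 0 0 k + (\<Sum>i\<in>{1..<n}. c i i k))\<^sup>2 - c 0 0 k * (\<Sum>i\<in>{1..<n}. c i i k)
     + (c 0 0 k)\<^sup>2"

definition Rk :: "nat \<Rightarrow> (nat \<Rightarrow> nat \<Rightarrow> nat \<Rightarrow> real) \<Rightarrow> nat \<Rightarrow> real" where
  "Rk n c k = (\<Sum>i\<in>{1..<n} - {k}. (c 0 i k)\<^sup>2)"

lemma Dq_decomp:
  assumes n2: "2 \<le> n"
    and s1: "\<And>i j k. i<n \<Longrightarrow> j<n \<Longrightarrow> k<n \<Longrightarrow> c i j k = c j i k"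
    and s2: "\<And>i j k. i<n \<Longrightarrow> j<n \<Longrightarrow> k<n \<Longrightarrow> c i j k = c i k j"
  shows "Dq n c = G0 n c + (\<Sum>k\<in>{1..<n}. Gk n c k) + (\<Sum>k\<in>{1..<n}. Rk n c k)"
proof -
  have n0: "0 < n" using n2 by simp
  let ?a = "\<lambda>k. c 0 0 k" and ?s = "\<lambda>k. \<Sum>i\<in>{1..<n}. c i i k"
  have t1: "(\<Sum>k<n. (\<Sum>i<n. c i i k)\<^sup>2) = (?a 0 + ?s 0)\<^sup>2 + (\<Sum>k\<in>{1..<n}. (?a k + ?s k)\<^sup>2)"
  proof -
    have A: "\<And>k. (\<Sum>i<n. c i i k) = ?a k + ?s k" by (rule sum_split0[OF n0])
    have "(\<Sum>k<n. (\<Sum>i<n. c i i k)\<^sup>2) = (\<Sum>k<n. (?a k + ?s k)\<^sup>2)" by (simp only: A)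
    also have "\<dots> = (?a 0 + ?s 0)\<^sup>2 + (\<Sum>k\<in>{1..<n}. (?a k + ?s k)\<^sup>2)" by (rule sum_split0[OF n0])
    finally show ?thesis .
  qed
  have "(\<Sum>i\<in>{1..<n}. \<Sum>k<n. c 0 0 k * c i i k) = (\<Sum>k<n. \<Sum>i\<in>{1..<n}. c 0 0 k * c i i k)"
    by (rule sum.swap)
  also have "\<dots> = (\<Sum>k<n. ?a k * ?s k)" by (simp add: sum_distrib_left)
  also have "\<dots> = ?a 0 * ?s 0 + (\<Sum>k\<in>{1..<n}. ?a k * ?s k)" by (rule sum_split0[OF n0])
  finally have t2: "(\<Sum>i\<in>{1..<n}. \<Sum>k<n. c 0 0 k * c i i k) = ?a 0 * ?s 0 + (\<Sum>k\<in>{1..<n}. ?a k * ?s k)" .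
  have "(\<Sum>i\<in>{1..<n}. \<Sum>k<n. (c 0 i k)\<^sup>2) = (\<Sum>k<n. \<Sum>i\<in>{1..<n}. (c 0 i k)\<^sup>2)"
    by (rule sum.swap)
  also have "\<dots> = (\<Sum>i\<in>{1..<n}. (c 0 i 0)\<^sup>2) + (\<Sum>k\<in>{1..<n}. \<Sum>i\<in>{1..<n}. (c 0 i k)\<^sup>2)"
    by (rule sum_split0[OF n0])
  also have "(\<Sum>i\<in>{1..<n}. (c 0 i 0)\<^sup>2) = (\<Sum>i\<in>{1..<n}. (?a i)\<^sup>2)"
    by (rule sum.cong) (use s2 n0 in auto)
  also have "(\<Sum>k\<in>{1..<n}. \<Sum>i\<in>{1..<n}. (c 0 i k)\<^sup>2) = (\<Sum>k\<in>{1..<n}. (c k k 0)\<^sup>2 + Rk n c k)"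
  proof (rule sum.cong)
    fix k assume k: "k \<in> {1..<n}"
    have "(\<Sum>i\<in>{1..<n}. (c 0 i k)\<^sup>2) = (c 0 k k)\<^sup>2 + (\<Sum>i\<in>{1..<n} - {k}. (c 0 i k)\<^sup>2)"
      using k by (simp add: sum.remove)
    moreover have "c 0 k k = c k k 0" using s1[of 0 k k] s2[of k 0 k] k by auto
    ultimately show "(\<Sum>i\<in>{1..<n}. (c 0 i k)\<^sup>2) = (c k k 0)\<^sup>2 + Rk n c k" by (simp add: Rk_def)
  qed simp
  finally have t3: "(\<Sum>i\<in>{1..<n}. \<Sum>k<n. (c 0 i k)\<^sup>2) = (\<Sum>i\<in>{1..<n}. (?a i)\<^sup>2) + (\<Sum>k\<in>{1..<n}. (c k k 0)\<^sup>2 + Rk n c k)" .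
  show ?thesis
    unfolding Dq_def t1 t2 t3 G0_def Gk_def qn_def
    by (simp add: sum.distrib sum_subtractf sum_distrib_left algebra_simps)
qed

lemma Rk_nonneg: "Rk n c k \<ge> 0"
  by (simp add: Rk_def sum_nonneg)

lemma Gk_props:
  assumes "2 \<le> n"
  shows "Gk n c k \<ge> 0"
    and "Gk n c k = 0 \<Longrightarrow> (n > 2 \<longrightarrow> c 0 0 k = 0) \<and> (real n - 1) * (\<Sum>i\<in>{1..<n}. c i i k) = (real n + 1) * c 0 0 k"
proof -
  have x: "real n \<ge> 2" using assms by simp
  show "Gk n c k \<ge> 0" unfolding Gk_def qn_def by (rule G_props(1)[OF x])
  assume "Gk n c k = 0"
  then show "(n > 2 \<longrightarrow> c 0 0 k = 0) \<and> (real n - 1) * (\<Sum>i\<in>{1..<n}. c i i k) = (real n + 1) * c 0 0 k"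
    using G_props(2)[OF x, of "c 0 0 k" "\<Sum>i\<in>{1..<n}. c i i k"] unfolding Gk_def qn_def by simp
qed

lemma G0_props:
  assumes n2: "2 \<le> n"
  shows "G0 n c \<ge> 0"
    and "G0 n c = 0 \<Longrightarrow> c 0 0 0 = (real n + 1) * c 1 1 0"
proof -
  let ?x = "real n" and ?a = "c 0 0 0" and ?s = "\<Sum>i\<in>{1..<n}. c i i 0"
  let ?V = "\<Sum>k\<in>{1..<n}. (c k k 0 - ?s / (?x - 1))\<^sup>2"
  have x: "?x \<ge> 2" using n2 by simp
  have card: "real (card {1..<n}) = ?x - 1" using n2 by (simp add: of_nat_diff)
  have v: "(\<Sum>k\<in>{1..<n}. (c k k 0)\<^sup>2) = ?s\<^sup>2 / (?x - 1) + ?V"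
    using var_ident[of "{1..<n}" "\<lambda>k. c k k 0"] n2 card by simp
  have V0: "?V \<ge> 0" by (simp add: sum_nonneg)
  have e: "4*?x*(?x-1) * G0 n c = ((?x-1)*?a - (?x+1)*?s)\<^sup>2 + 4*?x*(?x-1)*?V"
    unfolding G0_def qn_def v using x by (simp add: field_simps power2_eq_square)
  have p: "4*?x*(?x-1) > 0" using x by simp
  have r: "4*?x*(?x-1)*?V \<ge> 0" using p V0 by simp
  have "4*?x*(?x-1) * G0 n c \<ge> 0" using e r by simp
  then show "G0 n c \<ge> 0" using p by (simp add: zero_le_mult_iff)
  assume "G0 n c = 0"
  then have "((?x-1)*?a - (?x+1)*?s)\<^sup>2 + 4*?x*(?x-1)*?V = 0" using e by simp
  then have a: "((?x-1)*?a - (?x+1)*?s)\<^sup>2 = 0" and b: "4*?x*(?x-1)*?V = 0"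
    using r by (smt (verit) zero_le_power2)+
  have "?V = 0" using b n2 by auto
  then have all: "\<forall>k\<in>{1..<n}. (c k k 0 - ?s / (?x - 1))\<^sup>2 = 0"
    by (rule iffD1[OF sum_nonneg_eq_0_iff, rotated 2]) simp_all
  have "(c 1 1 0 - ?s / (?x - 1))\<^sup>2 = 0" using bspec[OF all, of 1] n2 by simp
  then have b1: "c 1 1 0 = ?s / (?x - 1)" by simp
  have s_eq: "?s = (?x - 1) * c 1 1 0" using b1 x by (simp add: field_simps)
  have "(?x-1)*?a = (?x+1)*?s" using a by simp
  then have "(?x-1)*?a = (?x-1)*((?x+1)*c 1 1 0)" by (simp only: s_eq) (simp add: algebra_simps)
  then show "c 0 0 0 = (?x + 1) * c 1 1 0" using x by simp
qed

lemma Dq_props: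
  assumes n2: "2 \<le> n"
    and s1: "\<And>i j k. i<n \<Longrightarrow> j<n \<Longrightarrow> k<n \<Longrightarrow> c i j k = c j i k"
    and s2: "\<And>i j k. i<n \<Longrightarrow> j<n \<Longrightarrow> k<n \<Longrightarrow> c i j k = c i k j"
  shows "Dq n c \<ge> 0"
    and "Dq n c = 0 \<Longrightarrow> G0 n c = 0 \<and> (\<forall>k\<in>{1..<n}. Gk n c k = 0)"
proof -
  have d: "Dq n c = G0 n c + (\<Sum>k\<in>{1..<n}. Gk n c k) + (\<Sum>k\<in>{1..<n}. Rk n c k)"
    by (rule Dq_decomp[OF n2 s1 s2])
  have g0: "G0 n c \<ge> 0" by (rule G0_props(1)[OF n2])
  have gk: "\<And>k. Gk n c k \<ge> 0" by (rule Gk_props(1)[OF n2])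
  have sg: "(\<Sum>k\<in>{1..<n}. Gk n c k) \<ge> 0" using gk by (simp add: sum_nonneg)
  have sr: "(\<Sum>k\<in>{1..<n}. Rk n c k) \<ge> 0" using Rk_nonneg by (simp add: sum_nonneg)
  show "Dq n c \<ge> 0" using d g0 sg sr by simp
  assume "Dq n c = 0"
  then have "G0 n c = 0" "(\<Sum>k\<in>{1..<n}. Gk n c k) = 0" using d g0 sg sr by linarith+
  moreover have "\<forall>k\<in>{1..<n}. Gk n c k = 0"
    using calculation(2) sum_nonneg_eq_0_iff[of "{1..<n}" "Gk n c"] gk by simp
  ultimately show "G0 n c = 0 \<and> (\<forall>k\<in>{1..<n}. Gk n c k = 0)" by simp
qed




lemma Dq2: "Dq 2 c = (1/8) * (c 0 0 0 + c 1 1 0)^2 + (1/8)*(c 0 0 1 + c 1 1 1)^2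
   - (c 0 0 0 * c 1 1 0 + c 0 0 1 * c 1 1 1) + (c 0 1 0)^2 + (c 0 1 1)^2"
  by (simp add: Dq_def numeral_2_eq_2 algebra_simps)

lemma Dq_cong:
  assumes "\<And>i j k. i<n \<Longrightarrow> j<n \<Longrightarrow> k<n \<Longrightarrow> c i j k = c' i j k"
  shows "Dq n c = Dq n c'"
proof -
  have 1: "(\<Sum>k<n. (\<Sum>i<n. c i i k)\<^sup>2) = (\<Sum>k<n. (\<Sum>i<n. c' i i k)\<^sup>2)"
    by (auto intro!: sum.cong simp: assms)
  have 2: "(\<Sum>i\<in>{1..<n}. \<Sum>k<n. c 0 0 k * c i i k) = (\<Sum>i\<in>{1..<n}. \<Sum>k<n. c' 0 0 k * c' i i k)"
    by (auto intro!: sum.cong simp: assms)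
  have 3: "(\<Sum>i\<in>{1..<n}. \<Sum>k<n. (c 0 i k)\<^sup>2) = (\<Sum>i\<in>{1..<n}. \<Sum>k<n. (c' 0 i k)\<^sup>2)"
    by (auto intro!: sum.cong simp: assms)
  show ?thesis unfolding Dq_def 1 2 3 ..
qed

context lagr begin

lemma normal_exp:
  assumes "onb L n e" "\<And>i. i<n \<Longrightarrow> inner v (e i) = 0"
  shows "v = (\<Sum>k<n. inner v (J (e k)) *\<^sub>R J (e k))"
proof -
  have "(\<Sum>i<n. inner v (e i) *\<^sub>R e i) = 0" using assms(2) by simp
  then show ?thesis using vexp[OF assms(1), of v] by simp
qed

lemma h_exp:
  assumes "onb L n e" "x \<in> L" "y \<in> L"
  shows "h x y = (\<Sum>k<n. inner (h x y) (J (e k)) *\<^sub>R J (e k))"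
  by (rule normal_exp[OF assms(1)]) (use assms in \<open>simp add: h_in_normal\<close>)

lemma combo:
  assumes "x \<in> L" "y \<in> L"
  shows "h (p *\<^sub>R x + q *\<^sub>R y) (r *\<^sub>R x + s *\<^sub>R y)
       = (p*r) *\<^sub>R h x x + (p * s + q*r) *\<^sub>R h x y + (q * s) *\<^sub>R h y y"
proof -
  have "h (p *\<^sub>R x + q *\<^sub>R y) (r *\<^sub>R x + s *\<^sub>R y)
      = h (p *\<^sub>R x) (r *\<^sub>R x) + h (p *\<^sub>R x) (s *\<^sub>R y) + h (q *\<^sub>R y) (r *\<^sub>R x) + h (q *\<^sub>R y) (s *\<^sub>R y)"
    using h_bil by (simp add: bilinear_ladd bilinear_radd)
  also have "\<dots> = (p*r) *\<^sub>R h x x + (p * s) *\<^sub>R h x y + (q*r) *\<^sub>R h y x + (q * s) *\<^sub>R h y y"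
    by (simp add: h_scale)
  finally show ?thesis using h_sym[OF assms(2,1)] by (simp add: algebra_simps)
qed

lemma h_zero_diag:
  assumes "\<And>X. X \<in> L \<Longrightarrow> norm X = 1 \<Longrightarrow> h X X = 0"
  shows "\<forall>X\<in>L. \<forall>Y\<in>L. h X Y = 0"
proof -
  have d: "h X X = 0" if X: "X \<in> L" for X
  proof (cases "X = 0")
    case True
    then show ?thesis using h_bil by (simp add: bilinear_lzero)
  next
    case False
    let ?u = "(1 / norm X) *\<^sub>R X"
    have u: "?u \<in> L" "norm ?u = 1" using X False L_sub by (auto simp: subspace_scale)
    have "X = norm X *\<^sub>R ?u" using False by simp
    then have "h X X = h (norm X *\<^sub>R ?u) (norm X *\<^sub>R ?u)" by metis
    also have "\<dots> = (norm X * norm X) *\<^sub>R h ?u ?u" by (rule h_scale)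
    finally show ?thesis using assms[OF u] by simp
  qed
  show ?thesis
  proof (intro ballI)
    fix X Y assume X: "X \<in> L" and Y: "Y \<in> L"
    have "h (X + Y) (X + Y) = h X X + h X Y + h Y X + h Y Y"
      using h_bil by (simp add: bilinear_ladd bilinear_radd)
    moreover have "X + Y \<in> L" using X Y L_sub by (simp add: subspace_add)
    ultimately have "h X Y + h Y X = 0" using d X Y by simp
    then have "(2::real) *\<^sub>R h X Y = 0" using h_sym[OF X Y] by (simp add: scaleR_2)
    then show "h X Y = 0" by simp
  qed
qed

lemma par_of_eq:
  assumes e: "onb L n e" and n0: "0 < n" and z: "\<forall>k\<in>{1..<n}. hc e 0 0 k = 0"
  shows "h (e 0) (e 0) = hc e 0 0 0 *\<^sub>R J (e 0)"
proof -
  have L0: "e 0 \<in> L" using e n0 onb_in by blast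
  have "h (e 0) (e 0) = (\<Sum>k<n. hc e 0 0 k *\<^sub>R J (e k))"
    unfolding hc_def by (rule h_exp[OF e L0 L0])
  also have "\<dots> = hc e 0 0 0 *\<^sub>R J (e 0) + (\<Sum>k\<in>{1..<n}. hc e 0 0 k *\<^sub>R J (e k))"
    by (rule sum_split0[OF n0])
  also have "(\<Sum>k\<in>{1..<n}. hc e 0 0 k *\<^sub>R J (e k)) = 0" using z by simp
  finally show ?thesis by simp
qed

lemma hc_symm:
  assumes "onb L n e"
  shows "\<And>i j k. i<n \<Longrightarrow> j<n \<Longrightarrow> k<n \<Longrightarrow> hc e i j k = hc e j i k"
    and "\<And>i j k. i<n \<Longrightarrow> j<n \<Longrightarrow> k<n \<Longrightarrow> hc e i j k = hc e i k j"
  using hc_sym1[OF assms] hc_sym2[OF assms] by auto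

lemma eq_n3:
  assumes n3: "3 \<le> n"
    and eqall: "\<And>X. X\<in>L \<Longrightarrow> norm X = 1 \<Longrightarrow> \<exists>e. onb L n e \<and> e 0 = X \<and> Dq n (hc e) = 0"
  shows "\<forall>X\<in>L. \<forall>Y\<in>L. h X Y = 0"
proof -
  have n2: "2 \<le> n" using n3 by simp
  have step1: "\<exists>e. onb L n e \<and> e 0 = X \<and> h X X = hc e 0 0 0 *\<^sub>R J X
                  \<and> hc e 0 0 0 = (real n + 1) * hc e 1 1 0"
    if X: "X \<in> L" "norm X = 1" for X
  proof -
    obtain e where e: "onb L n e" "e 0 = X" "Dq n (hc e) = 0" using eqall[OF X] by blast
    have G: "G0 n (hc e) = 0" "\<forall>k\<in>{1..<n}. Gk n (hc e) k = 0"
      using Dq_props(2)[OF n2 hc_symm[OF e(1)] e(3)] by auto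
    have z: "\<forall>k\<in>{1..<n}. hc e 0 0 k = 0"
      using G(2) Gk_props(2)[OF n2] n3 by auto
    have "h X X = hc e 0 0 0 *\<^sub>R J X" using par_of_eq[OF e(1) _ z] n3 e(2) by simp
    moreover have "hc e 0 0 0 = (real n + 1) * hc e 1 1 0" using G0_props(2)[OF n2 G(1)] .
    ultimately show ?thesis using e by blast
  qed
  have step2: "h X X = 0" if X: "X \<in> L" "norm X = 1" for X
  proof -
    obtain e where e: "onb L n e" "e 0 = X" "h X X = hc e 0 0 0 *\<^sub>R J X"
        "hc e 0 0 0 = (real n + 1) * hc e 1 1 0"
      using step1[OF X] by blast
    let ?Y = "e 1"
    have Y: "?Y \<in> L" "norm ?Y = 1" using e(1) n3 by (auto simp: onb_in onb_inner norm_eq_1)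
    have XY: "inner ?Y X = 0" using e(1,2) n3 onb_inner[OF e(1), of 1 0] by simp
    obtain e' where e': "onb L n e'" "e' 0 = ?Y" "h ?Y ?Y = hc e' 0 0 0 *\<^sub>R J ?Y"
      using step1[OF Y] by blast
    have "hc e 1 1 0 = inner (h ?Y ?Y) (J X)" by (simp add: hc_def e(2))
    also have "\<dots> = hc e' 0 0 0 * inner (J ?Y) (J X)" using e'(3) by simp
    also have "\<dots> = 0" using XY by (simp add: J_isom)
    finally show ?thesis using e(3,4) by simp
  qed
  show ?thesis by (rule h_zero_diag) (use step2 in auto)
qed

lemma zero_Dq:
  assumes e: "onb L n e" and z: "\<forall>X\<in>L. \<forall>Y\<in>L. h X Y = 0"
  shows "Dq n (hc e) = 0"
proof -
  have "Dq n (hc e) = Dq n (\<lambda>_ _ _. 0)"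
    by (rule Dq_cong) (use e z in \<open>simp add: hc_def onb_in\<close>)
  then show ?thesis by (simp add: Dq_def)
qed

end



context lagr begin

lemma two_sum: "(\<Sum>k<2. f k) = f 0 + f (1::nat)"
  by (simp add: numeral_2_eq_2)

lemma eq_n2:
  assumes n: "n = 2" and e: "onb L n e" and D: "Dq n (hc e) = 0"
  shows "\<exists>e1 e2 \<mu>. e1 \<in> L \<and> e2 \<in> L \<and> norm e1 = 1 \<and> norm e2 = 1
                     \<and> inner e1 e2 = 0
                     \<and> h e1 e1 = (3 * \<mu>) *\<^sub>R J e1 \<and> h e2 e2 = \<mu> *\<^sub>R J e1
                     \<and> h e1 e2 = \<mu> *\<^sub>R J e2"
proof -
  have n2: "2 \<le> n" using n by simp
  have G: "G0 n (hc e) = 0" "\<forall>k\<in>{1..<n}. Gk n (hc e) k = 0"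
    using Dq_props(2)[OF n2 hc_symm[OF e] D] by auto
  have ga: "hc e 0 0 0 = 3 * hc e 1 1 0" using G0_props(2)[OF n2 G(1)] n by simp
  have "Gk n (hc e) 1 = 0" using G(2) n by simp
  then have "(real n - 1) * (\<Sum>i\<in>{1..<n}. hc e i i 1) = (real n + 1) * hc e 0 0 1"
    using Gk_props(2)[OF n2, of "hc e" 1] by simp
  then have gb: "hc e 1 1 1 = 3 * hc e 0 0 1" using n by (simp add: numeral_2_eq_2)
  define \<gamma> where "\<gamma> = hc e 1 1 0"
  define \<beta> where "\<beta> = hc e 0 0 1"
  have L0: "e 0 \<in> L" and L1: "e 1 \<in> L" using e n by (auto simp: onb_in)
  have i00: "inner (e 0) (e 0) = 1" and i11: "inner (e 1) (e 1) = 1" and i01: "inner (e 0) (e 1) = 0"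
    and i10: "inner (e 1) (e 0) = 0"
    using e n by (auto simp: onb_inner)
  have i11s: "inner (e (Suc 0)) (e (Suc 0)) = 1" and i01s: "inner (e 0) (e (Suc 0)) = 0"
    and i10s: "inner (e (Suc 0)) (e 0) = 0"
    using i11 i01 i10 by simp_all
  have hx: "h (e i) (e j) = hc e i j 0 *\<^sub>R J (e 0) + hc e i j 1 *\<^sub>R J (e 1)" if "i < 2" "j < 2" for i j
  proof -
    have "h (e i) (e j) = (\<Sum>k<n. hc e i j k *\<^sub>R J (e k))"
      unfolding hc_def by (rule h_exp[OF e]) (use e n that in \<open>auto simp: onb_in\<close>)
    then show ?thesis using n by (simp add: two_sum)
  qed
  have c010: "hc e 0 1 0 = \<beta>" using hc_sym2[OF e, of 0 1 0] n by (simp add: \<beta>_def)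
  have c011: "hc e 0 1 1 = \<gamma>" using hc_sym1[OF e, of 0 1 1] hc_sym2[OF e, of 1 0 1] n by (simp add: \<gamma>_def)
  have h00: "h (e 0) (e 0) = (3*\<gamma>) *\<^sub>R J (e 0) + \<beta> *\<^sub>R J (e 1)"
    using hx[of 0 0] ga by (simp add: \<gamma>_def \<beta>_def)
  have h01: "h (e 0) (e 1) = \<beta> *\<^sub>R J (e 0) + \<gamma> *\<^sub>R J (e 1)"
    using hx[of 0 1] c010 c011 by simp
  have h11: "h (e 1) (e 1) = \<gamma> *\<^sub>R J (e 0) + (3*\<beta>) *\<^sub>R J (e 1)"
    using hx[of 1 1] gb by (simp add: \<gamma>_def \<beta>_def)
  have comb: "h (p *\<^sub>R e 0 + q *\<^sub>R e 1) (r *\<^sub>R e 0 + s *\<^sub>R e 1)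
      = (p*r*(3*\<gamma>) + (p * s + q*r)*\<beta> + q * s*\<gamma>) *\<^sub>R J (e 0)
      + (p*r*\<beta> + (p * s + q*r)*\<gamma> + q * s*(3*\<beta>)) *\<^sub>R J (e 1)" for p q r s
    unfolding combo[OF L0 L1] h00 h01 h11
    by (simp add: algebra_simps scaleR_add_right scaleR_add_left)
  have Jc: "J (p *\<^sub>R e 0 + q *\<^sub>R e 1) = p *\<^sub>R J (e 0) + q *\<^sub>R J (e 1)" for p q
    by (simp add: linear_add[OF J_lin] linear_scale[OF J_lin])
  have ic: "inner (p *\<^sub>R e 0 + q *\<^sub>R e 1) (r *\<^sub>R e 0 + s *\<^sub>R e 1) = p*r + q * s" for p q r s
    by (simp add: inner_add_left inner_add_right i00 i11 i01 i10 i11s i01s i10s)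
  have Lc: "p *\<^sub>R e 0 + q *\<^sub>R e 1 \<in> L" for p q
    using L0 L1 L_sub by (simp add: subspace_add subspace_scale)
  have lin2: "A *\<^sub>R x + B *\<^sub>R y = A' *\<^sub>R x + B' *\<^sub>R y" if "A = A'" "B = B'" for A B A' B' and x y :: 'a
    using that by simp
  define \<mu> where "\<mu> = sqrt (\<gamma>\<^sup>2 + \<beta>\<^sup>2)"
  show ?thesis
  proof (cases "\<mu> = 0")
    case True
    then have "\<gamma>\<^sup>2 + \<beta>\<^sup>2 = 0" by (simp add: \<mu>_def)
    then have z: "\<gamma> = 0" "\<beta> = 0" by (smt (verit) zero_le_power2 power_eq_0_iff)+
    show ?thesis
    proof (intro exI conjI)
      show "e 0 \<in> L" "e 1 \<in> L" by (fact L0, fact L1)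
      show "norm (e 0) = 1" "norm (e 1) = 1" using i00 i11 by (simp_all add: norm_eq_1)
      show "inner (e 0) (e 1) = 0" by (fact i01)
      show "h (e 0) (e 0) = (3 * 0) *\<^sub>R J (e 0)" using h00 z by simp
      show "h (e 1) (e 1) = 0 *\<^sub>R J (e 0)" using h11 z by simp
      show "h (e 0) (e 1) = 0 *\<^sub>R J (e 1)" using h01 z by simp
    qed
  next
    case False
    define g where "g = \<gamma> / \<mu>"
    define b' where "b' = \<beta> / \<mu>"
    have mu2: "\<mu>\<^sup>2 = \<gamma>\<^sup>2 + \<beta>\<^sup>2" unfolding \<mu>_def by simp
    have gg: "\<gamma> = \<mu> * g" "\<beta> = \<mu> * b'" using False by (simp_all add: g_def b'_def)
    have u: "g\<^sup>2 + b'\<^sup>2 = 1"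
    proof -
      have "\<mu>\<^sup>2 * (g\<^sup>2 + b'\<^sup>2) = (\<mu>*g)\<^sup>2 + (\<mu>*b')\<^sup>2" by (simp add: power_mult_distrib algebra_simps)
      also have "\<dots> = \<mu>\<^sup>2 * 1" using mu2 gg by simp
      finally have "\<mu>\<^sup>2 * (g\<^sup>2 + b'\<^sup>2) = \<mu>\<^sup>2 * 1" .
      then show ?thesis using False by simp
    qed
    let ?f1 = "g *\<^sub>R e 0 + b' *\<^sub>R e 1" and ?f2 = "(- b') *\<^sub>R e 0 + g *\<^sub>R e 1"
    show ?thesis
    proof (intro exI conjI)
      show "?f1 \<in> L" "?f2 \<in> L" by (fact Lc, fact Lc)
      show "norm ?f1 = 1" unfolding norm_eq_1 ic using u by (simp add: power2_eq_square)
      show "norm ?f2 = 1" unfolding norm_eq_1 ic using u by (simp add: power2_eq_square)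
      show "inner ?f1 ?f2 = 0" unfolding ic by simp
      show "h ?f1 ?f1 = (3 * \<mu>) *\<^sub>R J ?f1"
        unfolding comb Jc scaleR_add_right scaleR_scaleR
        by (rule lin2) (use u gg in algebra)+
      show "h ?f2 ?f2 = \<mu> *\<^sub>R J ?f1"
        unfolding comb Jc scaleR_add_right scaleR_scaleR
        by (rule lin2) (use u gg in algebra)+
      show "h ?f1 ?f2 = \<mu> *\<^sub>R J ?f2"
        unfolding comb Jc scaleR_add_right scaleR_scaleR
        by (rule lin2) (use u gg in algebra)+
    qed
  qed
qed

lemma conv_n2:
  assumes n: "n = 2" and f: "f1 \<in> L" "f2 \<in> L" "norm f1 = 1" "norm f2 = 1" "inner f1 f2 = 0"
    "h f1 f1 = (3*\<mu>) *\<^sub>R J f1" "h f2 f2 = \<mu> *\<^sub>R J f1" "h f1 f2 = \<mu> *\<^sub>R J f2"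
    and e: "onb L n e"
  shows "Dq n (hc e) = 0"
proof -
  define W where "W = \<mu> *\<^sub>R f1"
  define fb where "fb i = (if i = 0 then f1 else f2)" for i :: nat
  have f11: "inner f1 f1 = 1" "inner f2 f2 = 1" "inner f2 f1 = 0"
    using f by (auto simp: norm_eq_1 inner_commute)
  have fb: "onb L n fb" using f f11 n unfolding onb_def fb_def by auto
  have par: "inner x y = inner x f1 * inner f1 y + inner x f2 * inner f2 y" if "x \<in> L" for x y
    using onb_parseval[OF L_sub L_dim fb that, of y] n by (simp add: two_sum fb_def)
  have exp2: "x = inner x f1 *\<^sub>R f1 + inner x f2 *\<^sub>R f2" if "x \<in> L" for x
    using onb_expand[OF L_sub L_dim fb that] n by (simp add: two_sum fb_def)
  have tri: "inner (h x y) (J z) = inner x y * inner W z + inner W x * inner y z + inner W y * inner x z"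
    if xyz: "x \<in> L" "y \<in> L" "z \<in> L" for x y z
  proof -
    let ?a1 = "inner x f1" and ?a2 = "inner x f2" and ?b1 = "inner y f1" and ?b2 = "inner y f2"
    have "h x y = h (?a1 *\<^sub>R f1 + ?a2 *\<^sub>R f2) (?b1 *\<^sub>R f1 + ?b2 *\<^sub>R f2)"
      using exp2[OF xyz(1)] exp2[OF xyz(2)] by metis
    also have "\<dots> = (?a1 * ?b1) *\<^sub>R h f1 f1 + (?a1 * ?b2 + ?a2 * ?b1) *\<^sub>R h f1 f2 + (?a2 * ?b2) *\<^sub>R h f2 f2"
      by (rule combo[OF f(1,2)])
    finally have hxy: "h x y = (?a1 * ?b1) *\<^sub>R h f1 f1 + (?a1 * ?b2 + ?a2 * ?b1) *\<^sub>R h f1 f2 + (?a2 * ?b2) *\<^sub>R h f2 f2" .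
    have l: "inner (h x y) (J z) = ?a1 * ?b1 * (3 * \<mu>) * inner f1 z + (?a1 * ?b2 + ?a2 * ?b1) * \<mu> * inner f2 z
              + ?a2 * ?b2 * \<mu> * inner f1 z"
      unfolding hxy using f(6-8) by (simp add: inner_add_left J_isom)
    have xy: "inner x y = ?a1 * ?b1 + ?a2 * ?b2" using par[OF xyz(1), of y] by (simp add: inner_commute)
    have yz: "inner y z = ?b1 * inner f1 z + ?b2 * inner f2 z" using par[OF xyz(2), of z] by simp
    have xz: "inner x z = ?a1 * inner f1 z + ?a2 * inner f2 z" using par[OF xyz(1), of z] by simp
    have w: "inner W z = \<mu> * inner f1 z" "inner W x = \<mu> * ?a1" "inner W y = \<mu> * ?b1"
      by (simp_all add: W_def inner_commute)
    show ?thesis unfolding l xy yz xz w by (simp add: algebra_simps)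
  qed
  have L0: "e 0 \<in> L" and L1: "e 1 \<in> L" using e n by (auto simp: onb_in)
  have i00: "inner (e 0) (e 0) = 1" and i11: "inner (e 1) (e 1) = 1" and i01: "inner (e 0) (e 1) = 0"
    and i10: "inner (e 1) (e 0) = 0"
    using e n by (auto simp: onb_inner)
  have i11s: "inner (e (Suc 0)) (e (Suc 0)) = 1" and i01s: "inner (e 0) (e (Suc 0)) = 0"
    and i10s: "inner (e (Suc 0)) (e 0) = 0"
    using i11 i01 i10 by simp_all
  have c: "hc e i j k = inner (e i) (e j) * inner W (e k) + inner W (e i) * inner (e j) (e k)
            + inner W (e j) * inner (e i) (e k)" if "i \<in> {0,1}" "j \<in> {0,1}" "k \<in> {0,1}" for i j k
    unfolding hc_def by (rule tri) (use that L0 L1 in auto)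
  have "Dq n (hc e) = Dq 2 (hc e)" using n by simp
  also have "\<dots> = 0" unfolding Dq2 using c[of 0 0 0] c[of 1 1 0] c[of 0 0 1] c[of 1 1 1] c[of 0 1 0] c[of 0 1 1]
    by (simp add: i00 i11 i01 i10 i11s i01s i10s power2_eq_square algebra_simps)
  finally show ?thesis .
qed

end



context lagr begin

lemma main:
  fixes xi :: 'a and a b c :: real and R :: "'a \<Rightarrow> 'a \<Rightarrow> 'a \<Rightarrow> 'a \<Rightarrow> real"
  assumes n2: "n \<ge> 2" and xi_unit: "norm xi = 1"
    and Gauss: "\<And>X Y Z W. X \<in> L \<Longrightarrow> Y \<in> L \<Longrightarrow> Z \<in> L \<Longrightarrow> W \<in> L \<Longrightarrow>
                  R X Y Z W = Rbar a b c J xi X Y Z W + inner (h X W) (h Y Z) - inner (h X Z) (h Y W)"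
  shows "(\<forall>X\<in>L. norm X = 1 \<longrightarrow>
            Ric L n R X \<le> real (n - 1) / 4 * a
              + (1/8) * (real (n - 2) * ((eta xi X)\<^sup>2 + (eta_t J xi X)\<^sup>2) + 1) * b
              + (norm (eta xi X *\<^sub>R tproj L (J xi) - eta_t J xi X *\<^sub>R tproj L xi))\<^sup>2 * c
              + real ((n - 1) * n) / 4 * (norm (mean_curv L n h))\<^sup>2)
       \<and> ((\<forall>X\<in>L. norm X = 1 \<longrightarrow>
            Ric L n R X = real (n - 1) / 4 * a
              + (1/8) * (real (n - 2) * ((eta xi X)\<^sup>2 + (eta_t J xi X)\<^sup>2) + 1) * b
              + (norm (eta xi X *\<^sub>R tproj L (J xi) - eta_t J xi X *\<^sub>R tproj L xi))\<^sup>2 * c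
              + real ((n - 1) * n) / 4 * (norm (mean_curv L n h))\<^sup>2)
          \<longleftrightarrow> ((\<forall>X\<in>L. \<forall>Y\<in>L. h X Y = 0)
               \<or> (n = 2 \<and> (\<exists>e1 e2 \<mu>. e1 \<in> L \<and> e2 \<in> L \<and> norm e1 = 1 \<and> norm e2 = 1
                     \<and> inner e1 e2 = 0
                     \<and> h e1 e1 = (3 * \<mu>) *\<^sub>R J e1 \<and> h e2 e2 = \<mu> *\<^sub>R J e1
                     \<and> h e1 e2 = \<mu> *\<^sub>R J e2))))"
proof -
  let ?RHS = "\<lambda>X. real (n - 1) / 4 * a
              + (1/8) * (real (n - 2) * ((eta xi X)\<^sup>2 + (eta_t J xi X)\<^sup>2) + 1) * b
              + (norm (eta xi X *\<^sub>R tproj L (J xi) - eta_t J xi X *\<^sub>R tproj L xi))\<^sup>2 * c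
              + real ((n - 1) * n) / 4 * (norm (mean_curv L n h))\<^sup>2"
  let ?H2 = "\<exists>e1 e2 \<mu>. e1 \<in> L \<and> e2 \<in> L \<and> norm e1 = 1 \<and> norm e2 = 1
                     \<and> inner e1 e2 = 0
                     \<and> h e1 e1 = (3 * \<mu>) *\<^sub>R J e1 \<and> h e2 e2 = \<mu> *\<^sub>R J e1
                     \<and> h e1 e2 = \<mu> *\<^sub>R J e2"
  have ric: "\<exists>e. onb L n e \<and> e 0 = X \<and> Ric L n R X = ?RHS X - Dq n (hc e)"
    if X: "X \<in> L" "norm X = 1" for X
  proof -
    define e where "e = (SOME e. onb L n e \<and> e 0 = X)"
    have e: "onb L n e \<and> e 0 = X"
      unfolding e_def by (rule someI_ex[OF onb_exists_X[OF L_sub L_dim X]])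
    have "Ric L n R X = (\<Sum>i\<in>{1..<n}. R (e 0) (e i) (e i) (e 0))"
      by (simp add: Ric_def e_def Let_def)
    also have "\<dots> = ?RHS X - Dq n (hc e)"
      using ric_formula[OF conjunct1[OF e] n2 xi_unit Gauss] conjunct2[OF e] by simp
    finally show ?thesis using e by blast
  qed
  have dq0: "Dq n (hc e) \<ge> 0" if "onb L n e" for e
    by (rule Dq_props(1)[OF n2 hc_symm[OF that]])
  have le: "\<forall>X\<in>L. norm X = 1 \<longrightarrow> Ric L n R X \<le> ?RHS X"
  proof (intro ballI impI)
    fix X assume "X \<in> L" "norm X = 1"
    then obtain e where "onb L n e" "Ric L n R X = ?RHS X - Dq n (hc e)" using ric by blast
    then show "Ric L n R X \<le> ?RHS X" using dq0 by force
  qed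
  have iff: "(\<forall>X\<in>L. norm X = 1 \<longrightarrow> Ric L n R X = ?RHS X)
      \<longleftrightarrow> ((\<forall>X\<in>L. \<forall>Y\<in>L. h X Y = 0) \<or> (n = 2 \<and> ?H2))"
  proof
    assume all: "\<forall>X\<in>L. norm X = 1 \<longrightarrow> Ric L n R X = ?RHS X"
    have eqall: "\<exists>e. onb L n e \<and> e 0 = X \<and> Dq n (hc e) = 0" if X: "X \<in> L" "norm X = 1" for X
    proof -
      obtain e where e: "onb L n e" "e 0 = X" "Ric L n R X = ?RHS X - Dq n (hc e)" using ric[OF X] by blast
      have "Ric L n R X = ?RHS X" using all X by blast
      then show ?thesis using e by auto
    qed
    show "(\<forall>X\<in>L. \<forall>Y\<in>L. h X Y = 0) \<or> (n = 2 \<and> ?H2)"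
    proof (cases "n = 2")
      case True
      obtain B where B: "B \<subseteq> L" "\<And>x. x \<in> B \<Longrightarrow> norm x = 1" "card B = dim L"
        using orthonormal_basis_subspace[OF L_sub] by metis
      have "B \<noteq> {}" using B(3) L_dim n2 by auto
      then obtain X where "X \<in> B" by blast
      then have X: "X \<in> L" "norm X = 1" using B by auto
      obtain e where "onb L n e" "Dq n (hc e) = 0" using eqall[OF X] by blast
      then have ?H2 using eq_n2[OF True] by blast
      then show ?thesis using True by blast
    next
      case False
      then have "3 \<le> n" using n2 by simp
      then show ?thesis using eq_n3 eqall by blast
    qed
  next
    assume H: "(\<forall>X\<in>L. \<forall>Y\<in>L. h X Y = 0) \<or> (n = 2 \<and> ?H2)"
    have D0: "Dq n (hc e) = 0" if e: "onb L n e" for e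
    proof (cases "\<forall>X\<in>L. \<forall>Y\<in>L. h X Y = 0")
      case True
      then show ?thesis by (rule zero_Dq[OF e])
    next
      case False
      then have n: "n = 2" and h2: ?H2 using H by auto
      then obtain f1 f2 \<mu> where f: "f1 \<in> L" "f2 \<in> L" "norm f1 = 1" "norm f2 = 1" "inner f1 f2 = 0"
         "h f1 f1 = (3 * \<mu>) *\<^sub>R J f1" "h f2 f2 = \<mu> *\<^sub>R J f1" "h f1 f2 = \<mu> *\<^sub>R J f2" by blast
      show ?thesis by (rule conv_n2[OF n f e])
    qed
    show "\<forall>X\<in>L. norm X = 1 \<longrightarrow> Ric L n R X = ?RHS X"
    proof (intro ballI impI)
      fix X assume "X \<in> L" "norm X = 1"
      then obtain e where "onb L n e" "Ric L n R X = ?RHS X - Dq n (hc e)" using ric by blast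
      then show "Ric L n R X = ?RHS X" using D0 by simp
    qed
  qed
  show ?thesis using le iff by blast
qed

end

theorem theorem4p1:
  fixes J :: "'a::euclidean_space \<Rightarrow> 'a" and xi :: 'a and L :: "'a set" and n :: nat
    and a b c :: real and h :: "'a \<Rightarrow> 'a \<Rightarrow> 'a" and R :: "'a \<Rightarrow> 'a \<Rightarrow> 'a \<Rightarrow> 'a \<Rightarrow> real"
  assumes n2: "n \<ge> 2"
    and dimM: "DIM('a) = 2 * n"
    and J_lin: "linear J"
    and J_sq: "\<And>x. J (J x) = - x"
    and J_isom: "\<And>x y. inner (J x) (J y) = inner x y"
    and xi_unit: "norm xi = 1"
    and L_sub: "subspace L"
    and L_dim: "dim L = n"
    and Lagr: "J ` L = {v. \<forall>x\<in>L. inner v x = 0}"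
    and h_bil: "bilinear h"
    and h_sym: "\<And>X Y. X \<in> L \<Longrightarrow> Y \<in> L \<Longrightarrow> h X Y = h Y X"
    and h_normal: "\<And>X Y Z. X \<in> L \<Longrightarrow> Y \<in> L \<Longrightarrow> Z \<in> L \<Longrightarrow> inner (h X Y) Z = 0"
    and h_cubic: "\<And>X Y Z. X \<in> L \<Longrightarrow> Y \<in> L \<Longrightarrow> Z \<in> L \<Longrightarrow>
                    inner (h X Y) (J Z) = inner (h X Z) (J Y)"
    and Gauss: "\<And>X Y Z W. X \<in> L \<Longrightarrow> Y \<in> L \<Longrightarrow> Z \<in> L \<Longrightarrow> W \<in> L \<Longrightarrow>
                  R X Y Z W = Rbar a b c J xi X Y Z W + inner (h X W) (h Y Z) - inner (h X Z) (h Y W)"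
  shows "(\<forall>X\<in>L. norm X = 1 \<longrightarrow>
            Ric L n R X \<le> real (n - 1) / 4 * a
              + (1/8) * (real (n - 2) * ((eta xi X)\<^sup>2 + (eta_t J xi X)\<^sup>2) + 1) * b
              + (norm (eta xi X *\<^sub>R tproj L (J xi) - eta_t J xi X *\<^sub>R tproj L xi))\<^sup>2 * c
              + real ((n - 1) * n) / 4 * (norm (mean_curv L n h))\<^sup>2)
       \<and> ((\<forall>X\<in>L. norm X = 1 \<longrightarrow>
            Ric L n R X = real (n - 1) / 4 * a
              + (1/8) * (real (n - 2) * ((eta xi X)\<^sup>2 + (eta_t J xi X)\<^sup>2) + 1) * b
              + (norm (eta xi X *\<^sub>R tproj L (J xi) - eta_t J xi X *\<^sub>R tproj L xi))\<^sup>2 * c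
              + real ((n - 1) * n) / 4 * (norm (mean_curv L n h))\<^sup>2)
          \<longleftrightarrow> ((\<forall>X\<in>L. \<forall>Y\<in>L. h X Y = 0)
               \<or> (n = 2 \<and> (\<exists>e1 e2 \<mu>. e1 \<in> L \<and> e2 \<in> L \<and> norm e1 = 1 \<and> norm e2 = 1
                     \<and> inner e1 e2 = 0
                     \<and> h e1 e1 = (3 * \<mu>) *\<^sub>R J e1 \<and> h e2 e2 = \<mu> *\<^sub>R J e1
                     \<and> h e1 e2 = \<mu> *\<^sub>R J e2))))"
proof -
  have L: "lagr J L n h" unfolding lagr_def
    using J_lin J_sq J_isom L_sub L_dim Lagr h_bil h_sym h_normal h_cubic by blast
  show ?thesis by (rule lagr.main[OF L n2 xi_unit Gauss])
qed

end
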